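(* For every modal proposition $A$, if $\mathsf{LC}\vdash A$ then $\mathsf{iGL}\vdash A^\Box$.
   Context: Modal language: propositional variables, $\bot$, $\wedge,\vee,\to$, $\Box$; atomic = variables and $\bot$. $\mathsf{iGL}$: intuitionistic propositional logic in the modal language plus $\Box(A\to B)\to(\Box A\to\Box B)$, $\Box A\to\Box\Box A$, $\Box(\Box A\to A)\to\Box A$, closed under modus ponens and necessitation. $\mathsf{LC}:=\mathsf{iGL}+\{A\to\Box A\}$. Box-translation: $A^\Box:=A\wedge\Box A$ for atomic $A$; $(A\circ B)^\Box:=A^\Box\circ B^\Box$ for $\circ\in\{\wedge,\vee\}$; $(A\to B)^\Box:=(A^\Box\to B^\Box)\wedge\Box(A^\Box\to B^\Box)$; $(\Box A)^\Box:=\Box(A^\Box)$. *)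

theory Defs
  imports Main
begin

datatype form =
    Var nat
  | Bot
  | And form form
  | Or form form
  | Imp form form
  | Box form

inductive ipc_axiom :: "form \<Rightarrow> bool" where
  ax_K: "ipc_axiom (Imp A (Imp B A))"
| ax_S: "ipc_axiom (Imp (Imp A (Imp B C)) (Imp (Imp A B) (Imp A C)))"
| ax_conjE1: "ipc_axiom (Imp (And A B) A)"
| ax_conjE2: "ipc_axiom (Imp (And A B) B)"
| ax_conjI: "ipc_axiom (Imp A (Imp B (And A B)))"
| ax_disjI1: "ipc_axiom (Imp A (Or A B))"
| ax_disjI2: "ipc_axiom (Imp B (Or A B))"
| ax_disjE: "ipc_axiom (Imp (Imp A C) (Imp (Imp B C) (Imp (Or A B) C)))"
| ax_efq: "ipc_axiom (Imp Bot A)"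

inductive iGL :: "form \<Rightarrow> bool" where
  iGL_ipc: "ipc_axiom A \<Longrightarrow> iGL A"
| iGL_K: "iGL (Imp (Box (Imp A B)) (Imp (Box A) (Box B)))"
| iGL_4: "iGL (Imp (Box A) (Box (Box A)))"
| iGL_L: "iGL (Imp (Box (Imp (Box A) A)) (Box A))"
| iGL_mp: "iGL (Imp A B) \<Longrightarrow> iGL A \<Longrightarrow> iGL B"
| iGL_nec: "iGL A \<Longrightarrow> iGL (Box A)"

inductive LC :: "form \<Rightarrow> bool" where
  LC_ipc: "ipc_axiom A \<Longrightarrow> LC A"
| LC_K: "LC (Imp (Box (Imp A B)) (Imp (Box A) (Box B)))"
| LC_4: "LC (Imp (Box A) (Box (Box A)))"
| LC_L: "LC (Imp (Box (Imp (Box A) A)) (Box A))"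
| LC_cp: "LC (Imp A (Box A))"
| LC_mp: "LC (Imp A B) \<Longrightarrow> LC A \<Longrightarrow> LC B"
| LC_nec: "LC A \<Longrightarrow> LC (Box A)"

fun boxtr :: "form \<Rightarrow> form" where
  "boxtr (Var p) = And (Var p) (Box (Var p))"
| "boxtr Bot = And Bot (Box Bot)"
| "boxtr (And A B) = And (boxtr A) (boxtr B)"
| "boxtr (Or A B) = Or (boxtr A) (boxtr B)"
| "boxtr (Imp A B) = And (Imp (boxtr A) (boxtr B)) (Box (Imp (boxtr A) (boxtr B)))"
| "boxtr (Box A) = Box (boxtr A)"

end

theory Submission
  imports Defs
begin

abbreviation st :: "form \<Rightarrow> form \<Rightarrow> form" where
  "st X Y \<equiv> And (Imp X Y) (Box (Imp X Y))"

lemma ax: "ipc_axiom A \<Longrightarrow> iGL A" by (rule iGL_ipc)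

lemma srule: "iGL (Imp X (Imp Y Z)) \<Longrightarrow> iGL (Imp X Y) \<Longrightarrow> iGL (Imp X Z)"
  by (meson iGL_mp ax ipc_axiom.ax_S)

lemma weak: "iGL Y \<Longrightarrow> iGL (Imp X Y)"
  by (meson iGL_mp ax ipc_axiom.ax_K)

lemma refl: "iGL (Imp X X)"
  by (meson srule ax ipc_axiom.ax_K)

lemma trans: "iGL (Imp X Y) \<Longrightarrow> iGL (Imp Y Z) \<Longrightarrow> iGL (Imp X Z)"
  by (meson srule weak)

lemma conjR: "iGL (Imp X Y) \<Longrightarrow> iGL (Imp X Z) \<Longrightarrow> iGL (Imp X (And Y Z))"
  by (meson srule trans ax ipc_axiom.ax_conjI)

lemma c1: "iGL (Imp (And X Y) X)" by (rule ax, rule ipc_axiom.ax_conjE1)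
lemma c2: "iGL (Imp (And X Y) Y)" by (rule ax, rule ipc_axiom.ax_conjE2)

lemma postc: "iGL (Imp X (Imp Y W)) \<Longrightarrow> iGL (Imp W Z) \<Longrightarrow> iGL (Imp X (Imp Y Z))"
proof -
  assume a: "iGL (Imp X (Imp Y W))" and b: "iGL (Imp W Z)"
  have "iGL (Imp Y (Imp W Z))" using b by (rule weak)
  hence "iGL (Imp (Imp Y W) (Imp Y Z))" by (meson iGL_mp ax ipc_axiom.ax_S)
  thus ?thesis using a trans by blast
qed

lemma curry: "iGL (Imp (And X Y) Z) \<Longrightarrow> iGL (Imp X (Imp Y Z))"
  by (meson postc ax ipc_axiom.ax_conjI)

lemma uncurry: "iGL (Imp X (Imp Y Z)) \<Longrightarrow> iGL (Imp (And X Y) Z)"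
  by (meson srule trans c1 c2)

lemma disjR: "iGL (Imp X Z) \<Longrightarrow> iGL (Imp Y Z) \<Longrightarrow> iGL (Imp (Or X Y) Z)"
  by (meson iGL_mp ax ipc_axiom.ax_disjE)

lemma orctx: "iGL (Imp (And G X) Z) \<Longrightarrow> iGL (Imp (And G Y) Z) \<Longrightarrow> iGL (Imp (And G (Or X Y)) Z)"
proof -
  assume a: "iGL (Imp (And G X) Z)" and b: "iGL (Imp (And G Y) Z)"
  have "iGL (Imp (And X G) Z)" using a by (meson trans conjR c1 c2)
  hence 1: "iGL (Imp X (Imp G Z))" by (rule curry)
  have "iGL (Imp (And Y G) Z)" using b by (meson trans conjR c1 c2)
  hence 2: "iGL (Imp Y (Imp G Z))" by (rule curry)
  have "iGL (Imp (Or X Y) (Imp G Z))" using 1 2 by (rule disjR)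
  hence "iGL (Imp (And (Or X Y) G) Z)" by (rule uncurry)
  thus ?thesis by (meson trans conjR c1 c2)
qed

lemma boxmono: "iGL (Imp X Y) \<Longrightarrow> iGL (Imp (Box X) (Box Y))"
  by (meson iGL_mp iGL_nec iGL_K)

lemma boxconj: "iGL (Imp (And (Box X) (Box Y)) (Box (And X Y)))"
proof -
  have "iGL (Imp (Box X) (Box (Imp Y (And X Y))))"
    by (rule boxmono, rule ax, rule ipc_axiom.ax_conjI)
  hence "iGL (Imp (Box X) (Imp (Box Y) (Box (And X Y))))" using iGL_K trans by blast
  thus ?thesis by (rule uncurry)
qed

lemma andI: "iGL X \<Longrightarrow> iGL Y \<Longrightarrow> iGL (And X Y)"
  by (meson iGL_mp ax ipc_axiom.ax_conjI)

lemma stI: "iGL (Imp X Y) \<Longrightarrow> iGL (st X Y)"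
  by (simp add: andI iGL_nec)

definition pers :: "form \<Rightarrow> bool" where "pers G \<longleftrightarrow> iGL (Imp G (Box G))"

lemma pers_and: "pers G \<Longrightarrow> pers H \<Longrightarrow> pers (And G H)"
  unfolding pers_def by (meson trans conjR c1 c2 boxconj)

lemma pers_box: "pers (Box X)" unfolding pers_def by (rule iGL_4)

lemma pers_st: "pers (st X Y)"
proof -
  have "iGL (Imp (st X Y) (Box (Imp X Y)))" by (rule c2)
  moreover have "iGL (Imp (st X Y) (Box (Box (Imp X Y))))" using c2 iGL_4 trans by blast
  ultimately have "iGL (Imp (st X Y) (And (Box (Imp X Y)) (Box (Box (Imp X Y)))))" by (rule conjR)
  thus ?thesis unfolding pers_def using boxconj trans by blast
qed

lemma apply_st: "iGL (Imp (And (st X Y) X) Y)"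
  by (meson uncurry c1)

lemma st_intro: "pers G \<Longrightarrow> iGL (Imp (And G X) Y) \<Longrightarrow> iGL (Imp G (st X Y))"
  unfolding pers_def by (meson curry boxmono trans conjR)

lemma pers_tr: "pers (boxtr A)"
proof (induction A)
  case (Var x)
  have "iGL (Imp (And (Var x) (Box (Var x))) (Box (Box (Var x))))" using c2 iGL_4 trans by blast
  hence "iGL (Imp (And (Var x) (Box (Var x))) (And (Box (Var x)) (Box (Box (Var x)))))"
    using c2 conjR by blast
  hence "iGL (Imp (And (Var x) (Box (Var x))) (Box (And (Var x) (Box (Var x)))))"
    using boxconj trans by blast
  then show ?case unfolding pers_def by simp
next
  case Bot
  then show ?case unfolding pers_def by (simp, meson trans c1 ax ipc_axiom.ax_efq)
next
  case (And A1 A2)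
  then show ?case by (simp add: pers_and)
next
  case (Or A1 A2)
  then show ?case unfolding pers_def
    by (simp, meson disjR trans boxmono ax ipc_axiom.ax_disjI1 ipc_axiom.ax_disjI2)
next
  case (Imp A1 A2)
  then show ?case using pers_st by simp
next
  case (Box A)
  then show ?case using pers_box by simp
qed

theorem lemma4p22:
  fixes A :: form
  assumes "LC A"
  shows "iGL (boxtr A)"
  using assms
proof (induction rule: LC.induct)
  case (LC_ipc A)
  then show ?case
  proof (cases rule: ipc_axiom.cases)
    case (ax_K A B)
    have "iGL (Imp (boxtr A) (st (boxtr B) (boxtr A)))" using pers_tr st_intro c1 by blast
    then show ?thesis using ax_K stI by simp
  next
    case (ax_S A B C)
    let ?a = "boxtr A" and ?b = "boxtr B" and ?c = "boxtr C"
    let ?G = "st ?a (st ?b ?c)" and ?H = "st ?a ?b"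
    have p: "pers (And ?G ?H)" by (simp add: pers_and pers_st)
    have 1: "iGL (Imp (And (And ?G ?H) ?a) (st ?b ?c))"
      by (meson trans conjR c1 c2 apply_st)
    have 2: "iGL (Imp (And (And ?G ?H) ?a) ?b)"
      by (meson trans conjR c1 c2 apply_st)
    have "iGL (Imp (And (And ?G ?H) ?a) ?c)" using 1 2 conjR apply_st trans by blast
    hence "iGL (Imp (And ?G ?H) (st ?a ?c))" using p st_intro by blast
    hence "iGL (Imp ?G (st ?H (st ?a ?c)))" using pers_st st_intro by blast
    then show ?thesis using ax_S stI by simp
  next
    case (ax_conjE1 A B) then show ?thesis using stI c1 by simp
  next
    case (ax_conjE2 A B) then show ?thesis using stI c2 by simp
  next
    case (ax_conjI A B)
    have "iGL (Imp (boxtr A) (st (boxtr B) (And (boxtr A) (boxtr B))))"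
      using pers_tr st_intro refl by blast
    then show ?thesis using ax_conjI stI by simp
  next
    case (ax_disjI1 A B) then show ?thesis using stI ax ipc_axiom.ax_disjI1 by simp
  next
    case (ax_disjI2 A B) then show ?thesis using stI ax ipc_axiom.ax_disjI2 by simp
  next
    case (ax_disjE A C B)
    let ?a = "boxtr A" and ?b = "boxtr B" and ?c = "boxtr C"
    let ?G = "st ?a ?c" and ?H = "st ?b ?c"
    have p: "pers (And ?G ?H)" by (simp add: pers_and pers_st)
    have 1: "iGL (Imp (And (And ?G ?H) ?a) ?c)" by (meson trans conjR c1 c2 apply_st)
    have 2: "iGL (Imp (And (And ?G ?H) ?b) ?c)" by (meson trans conjR c1 c2 apply_st)
    have "iGL (Imp (And (And ?G ?H) (Or ?a ?b)) ?c)" using 1 2 by (rule orctx)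
    hence "iGL (Imp (And ?G ?H) (st (Or ?a ?b) ?c))" using p st_intro by blast
    hence "iGL (Imp ?G (st ?H (st (Or ?a ?b) ?c)))" using pers_st st_intro by blast
    then show ?thesis using ax_disjE stI by simp
  next
    case (ax_efq A)
    then show ?thesis using stI by (simp, meson trans c1 ax ipc_axiom.ax_efq)
  qed
next
  case (LC_K A B)
  let ?a = "boxtr A" and ?b = "boxtr B"
  have "iGL (Imp (Box (st ?a ?b)) (Imp (Box ?a) (Box ?b)))" using boxmono c1 iGL_K trans by blast
  hence "iGL (Imp (And (Box (st ?a ?b)) (Box ?a)) (Box ?b))" by (rule uncurry)
  hence "iGL (Imp (Box (st ?a ?b)) (st (Box ?a) (Box ?b)))" using pers_box st_intro by blast
  then show ?case using stI by simp
next
  case (LC_4 A)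
  then show ?case using stI iGL_4 by simp
next
  case (LC_L A)
  let ?a = "boxtr A"
  have "iGL (Imp (Box (st (Box ?a) ?a)) (Box ?a))" using boxmono c1 iGL_L trans by blast
  then show ?case using stI by simp
next
  case (LC_cp A)
  then show ?case using stI pers_tr unfolding pers_def by simp
next
  case (LC_mp A B)
  then show ?case using iGL_mp c1 by (simp, blast)
next
  case (LC_nec A)
  then show ?case by (simp add: iGL_nec)
qed

end
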